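(* Let $H$ be a complex Hadamard matrix, let $\{C_1,\dots,C_t\}$ be a partition of the set of columns of $H$, and let $\{R,R_1\}$ be a partition of the set of rows of $H$. For $1\le i\le t$ let $M_{1i}$ denote the submatrix of $H$ with rows $R_1$ and columns $C_i$. Suppose that for all $i\neq j$, every column of $M_{1i}$ is orthogonal (with respect to the standard Hermitian inner product) to every column of $M_{1j}$. Then for any choice of $a_1,\dots,a_t\in\mathbb{T}$, the matrix obtained from $H$ by replacing each $M_{1i}$ by $a_iM_{1i}$ (all other entries unchanged) is a complex Hadamard matrix. In particular, for any single index $i$ and any $a\in\mathbb{T}$, replacing $M_{1i}$ by $aM_{1i}$ yields a complex Hadamard matrix.
   Context: $\mathbb{T}$ is the set of complex numbers of modulus $1$. A complex Hadamard matrix of order $n$ is an $n\times n$ matrix $H$ with all entries in $\mathbb{T}$ and $HH^{\ast}=nI_n$ (equivalently, its columns are pairwise orthogonal). *)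

theory Defs
  imports Complex_Main
begin

text \<open>An n x n complex matrix is represented as a function nat => nat => complex,
  only the entries with indices below n being relevant.\<close>

definition unit_circle :: "complex set" where
  "unit_circle = {z. cmod z = 1}"

definition complex_hadamard :: "nat \<Rightarrow> (nat \<Rightarrow> nat \<Rightarrow> complex) \<Rightarrow> bool" where
  "complex_hadamard n H \<longleftrightarrow>
     (\<forall>i<n. \<forall>j<n. H i j \<in> unit_circle) \<and>
     (\<forall>i<n. \<forall>k<n. (\<Sum>j<n. H i j * cnj (H k j)) = (if i = k then of_nat n else 0))"

end

theory Submission
  imports Defs Jordan_Normal_Form.Determinant
begin

lemma cols_to_rows:
  fixes G :: "nat \<Rightarrow> nat \<Rightarrow> complex"
  assumes "\<forall>p<n. \<forall>q<n. (\<Sum>r<n. cnj (G r p) * G r q) = (if p=q then of_nat n else 0)"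
  shows "\<forall>i<n. \<forall>k<n. (\<Sum>j<n. G i j * cnj (G k j)) = (if i=k then of_nat n else 0)"
proof (cases "n = 0")
  case True then show ?thesis by simp
next
  case False
  define A where "A = mat n n (\<lambda>(i,j). G i j)"
  define B where "B = mat n n (\<lambda>(i,j). cnj (G j i) / of_nat n)"
  have A: "A \<in> carrier_mat n n" and B: "B \<in> carrier_mat n n" by (auto simp: A_def B_def)
  have "B * A = 1\<^sub>m n"
  proof (rule eq_matI)
    fix p q assume pq: "p < dim_row (1\<^sub>m n)" "q < dim_col (1\<^sub>m n)"
    have "(B * A) $$ (p,q) = (\<Sum>r<n. cnj (G r p) * G r q) / of_nat n"
      using pq by (simp add: A_def B_def scalar_prod_def sum_divide_distrib lessThan_atLeast0)
    also have "\<dots> = 1\<^sub>m n $$ (p,q)" using pq assms False by auto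
    finally show "(B * A) $$ (p,q) = 1\<^sub>m n $$ (p,q)" .
  qed (auto simp: A_def B_def)
  then have AB: "A * B = 1\<^sub>m n" using mat_mult_left_right_inverse[OF B A] by simp
  show ?thesis
  proof (intro allI impI)
    fix i k assume ik: "i < n" "k < n"
    have "(\<Sum>j<n. G i j * cnj (G k j)) / of_nat n = (A * B) $$ (i,k)"
      using ik by (simp add: A_def B_def scalar_prod_def sum_divide_distrib lessThan_atLeast0)
    also have "\<dots> = (if i = k then 1 else 0)" using AB ik by simp
    finally show "(\<Sum>j<n. G i j * cnj (G k j)) = (if i=k then of_nat n else 0)"
      using False by (auto simp: field_simps split: if_splits)
  qed
qed

lemma rows_to_cols:
  fixes G :: "nat \<Rightarrow> nat \<Rightarrow> complex"
  assumes "\<forall>i<n. \<forall>k<n. (\<Sum>j<n. G i j * cnj (G k j)) = (if i=k then of_nat n else 0)"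
  shows "\<forall>p<n. \<forall>q<n. (\<Sum>r<n. cnj (G r p) * G r q) = (if p=q then of_nat n else 0)"
proof -
  have "\<forall>i<n. \<forall>k<n. (\<Sum>j<n. cnj (G j i) * cnj (cnj (G j k))) = (if i=k then of_nat n else 0)"
    by (rule cols_to_rows) (use assms in simp)
  then show ?thesis by simp
qed
theorem theorem6p3:
  fixes n t :: nat and H :: "nat \<Rightarrow> nat \<Rightarrow> complex"
    and C :: "nat \<Rightarrow> nat set" and R R1 :: "nat set"
  assumes hadamard: "complex_hadamard n H"
    and C_nonempty: "\<forall>i<t. C i \<noteq> {}"
    and C_disjoint: "\<forall>i<t. \<forall>j<t. i \<noteq> j \<longrightarrow> C i \<inter> C j = {}"
    and C_cover: "(\<Union>i<t. C i) = {..<n}"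
    and R_nonempty: "R \<noteq> {}" and R1_nonempty: "R1 \<noteq> {}"
    and R_disjoint: "R \<inter> R1 = {}"
    and R_cover: "R \<union> R1 = {..<n}"
    and orth: "\<forall>i<t. \<forall>j<t. i \<noteq> j \<longrightarrow>
                 (\<forall>p\<in>C i. \<forall>q\<in>C j. (\<Sum>r\<in>R1. H r p * cnj (H r q)) = 0)"
  shows "(\<forall>(a :: nat \<Rightarrow> complex) H'. (\<forall>i<t. a i \<in> unit_circle) \<longrightarrow>
            (\<forall>i<t. \<forall>r<n. \<forall>c\<in>C i. H' r c = (if r \<in> R1 then a i * H r c else H r c)) \<longrightarrow>
            complex_hadamard n H')
       \<and> (\<forall>i0<t. \<forall>(a :: complex) H'. a \<in> unit_circle \<longrightarrow>
            (\<forall>r<n. \<forall>c<n. H' r c = (if r \<in> R1 \<and> c \<in> C i0 then a * H r c else H r c)) \<longrightarrow>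
            complex_hadamard n H')"
proof -
  have Hu: "\<forall>i<n. \<forall>j<n. H i j \<in> unit_circle" and Hrows: "\<forall>i<n. \<forall>k<n. (\<Sum>j<n. H i j * cnj (H k j)) = (if i = k then of_nat n else 0)"
    using hadamard unfolding complex_hadamard_def by auto
  have Hcols: "\<forall>p<n. \<forall>q<n. (\<Sum>r<n. cnj (H r p) * H r q) = (if p=q then of_nat n else 0)"
    using rows_to_cols[OF Hrows] .
  have fin: "finite R" "finite R1" using R_cover by (metis finite_Un finite_lessThan)+
  have split: "\<And>f. (\<Sum>r<n. f r) = (\<Sum>r\<in>R. f r) + (\<Sum>r\<in>R1. f r)"
    using sum.union_disjoint[OF fin R_disjoint] R_cover by simp
  have idx: "\<forall>c<n. \<exists>i<t. c \<in> C i" using C_cover by blast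
  have part1: "complex_hadamard n H'" if au: "\<forall>i<t. a i \<in> unit_circle"
    and H'def: "\<forall>i<t. \<forall>r<n. \<forall>c\<in>C i. H' r c = (if r \<in> R1 then a i * H r c else H r c)" for a H'
  proof -
    have unit: "H' r c \<in> unit_circle" if rc: "r < n" "c < n" for r c
    proof -
      obtain i where i: "i < t" "c \<in> C i" using idx rc by blast
      show ?thesis using H'def i rc au Hu by (auto simp: unit_circle_def norm_mult)
    qed
    have cols: "(\<Sum>r<n. cnj (H' r p) * H' r q) = (\<Sum>r<n. cnj (H r p) * H r q)"
      if pq: "p < n" "q < n" for p q
    proof -
      obtain i where i: "i < t" "p \<in> C i" using idx pq by blast
      obtain j where j: "j < t" "q \<in> C j" using idx pq by blast
      have RR: "\<And>r. r \<in> R \<Longrightarrow> r < n \<and> r \<notin> R1" and RR1: "\<And>r. r \<in> R1 \<Longrightarrow> r < n"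
        using R_cover R_disjoint by auto
      have s0: "(\<Sum>r\<in>R. cnj (H' r p) * H' r q) = (\<Sum>r\<in>R. cnj (H r p) * H r q)"
        by (rule sum.cong) (use RR H'def i j in auto)
      have s1: "(\<Sum>r\<in>R1. cnj (H' r p) * H' r q) = (cnj (a i) * a j) * (\<Sum>r\<in>R1. cnj (H r p) * H r q)"
        unfolding sum_distrib_left by (rule sum.cong) (use RR1 H'def i j in auto)
      have "(\<Sum>r\<in>R1. cnj (H' r p) * H' r q) = (\<Sum>r\<in>R1. cnj (H r p) * H r q)"
      proof (cases "i = j")
        case True
        have "cnj (a i) * a i = 1" using au i by (simp add: unit_circle_def complex_norm_square[symmetric] mult.commute)
        then show ?thesis using s1 True by simp
      next
        case False
        have "(\<Sum>r\<in>R1. H r q * cnj (H r p)) = 0" using orth i j False by auto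
        then have z: "(\<Sum>r\<in>R1. cnj (H r p) * H r q) = 0" by (simp add: mult.commute)
        then show ?thesis using s1 by simp
      qed
      then show ?thesis using s0 split[of "\<lambda>r. cnj (H' r p) * H' r q"] split[of "\<lambda>r. cnj (H r p) * H r q"] by simp
    qed
    have "\<forall>p<n. \<forall>q<n. (\<Sum>r<n. cnj (H' r p) * H' r q) = (if p=q then of_nat n else 0)"
      using cols Hcols by simp
    from cols_to_rows[OF this] unit show ?thesis unfolding complex_hadamard_def by blast
  qed
  show ?thesis
  proof (intro conjI allI impI)
    fix a :: "nat \<Rightarrow> complex" and H' assume "\<forall>i<t. a i \<in> unit_circle"
      "\<forall>i<t. \<forall>r<n. \<forall>c\<in>C i. H' r c = (if r \<in> R1 then a i * H r c else H r c)"
    then show "complex_hadamard n H'" by (rule part1)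
  next
    fix i0 a H' assume i0: "i0 < t" and a: "a \<in> unit_circle"
      and H'def: "\<forall>r<n. \<forall>c<n. H' r c = (if r \<in> R1 \<and> c \<in> C i0 then a * H r c else H r c)"
    show "complex_hadamard n H'"
    proof -
      have h1: "\<forall>i<t. (if i = i0 then a else 1) \<in> unit_circle" using a by (simp add: unit_circle_def)
      have h2: "\<forall>i<t. \<forall>r<n. \<forall>c\<in>C i. H' r c = (if r \<in> R1 then (if i = i0 then a else 1) * H r c else H r c)"
      proof (intro allI impI ballI)
        fix i r c assume "i < t" "r < n" "c \<in> C i"
        moreover have "c < n" using C_cover \<open>i < t\<close> \<open>c \<in> C i\<close> by blast
        moreover have "i \<noteq> i0 \<Longrightarrow> c \<notin> C i0" using C_disjoint \<open>i < t\<close> i0 \<open>c \<in> C i\<close> by blast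
        ultimately show "H' r c = (if r \<in> R1 then (if i = i0 then a else 1) * H r c else H r c)"
          using H'def by auto
      qed
      show ?thesis by (rule part1[OF h1 h2])
    qed
  qed
qed

end
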